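(* Let $G$ be a connected graph with $n$ vertices and $k\ge1$. Let $B_k(G)$ be the sum of the spanning tree weights of all balanced connected $k$-partitions of $G$, and let $\tau_k(G)$ be the number of $k$-splittable spanning trees of $G$. Then $B_k(G)$ and $\tau_k(G)$ are within a factor $n^{2(k-1)}$ of each other, i.e. $n^{-2(k-1)}\tau_k(G)\le B_k(G)\le n^{2(k-1)}\tau_k(G)$.
   Context: A tree $T$ is $k$-splittable if there exist $k-1$ edges of $T$ whose removal leaves a forest whose $k$ connected components all have the same number of vertices. A connected $k$-partition of $G=(V,E)$ is a partition of $V$ into $k$ nonempty sets (pieces) each inducing a connected subgraph; it is balanced if all pieces have equal size. For a graph $H$, $\tau(H)$ is its number of spanning trees, and the spanning tree weight of a connected partition $P$ is $\prod_{S\in P}\tau(G[S])$. *)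

theory Defs
  imports Complex_Main "HOL-Library.Disjoint_Sets"
begin

definition simple_graph :: "'a set \<Rightarrow> 'a set set \<Rightarrow> bool" where
  "simple_graph V E \<longleftrightarrow> finite V \<and> (\<forall>e\<in>E. e \<subseteq> V \<and> card e = 2)"

definition adj :: "'a set \<Rightarrow> 'a set set \<Rightarrow> ('a \<times> 'a) set" where
  "adj S F = {(u,v). u \<in> S \<and> v \<in> S \<and> {u,v} \<in> F}"

definition connected_graph :: "'a set \<Rightarrow> 'a set set \<Rightarrow> bool" where
  "connected_graph S F \<longleftrightarrow> S \<noteq> {} \<and> (\<forall>u\<in>S. \<forall>v\<in>S. (u,v) \<in> (adj S F)\<^sup>*)"

definition components :: "'a set \<Rightarrow> 'a set set \<Rightarrow> 'a set set" where
  "components S F = S // {(u,v). u \<in> S \<and> v \<in> S \<and> (u,v) \<in> (adj S F)\<^sup>*}"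

definition induced_edges :: "'a set set \<Rightarrow> 'a set \<Rightarrow> 'a set set" where
  "induced_edges E S = {e \<in> E. e \<subseteq> S}"

text \<open>A tree on vertex set S with edge set T: connected and acyclic, where acyclic
  means that no edge lies on a cycle, i.e. deleting any edge disconnects the graph.\<close>
definition is_tree :: "'a set \<Rightarrow> 'a set set \<Rightarrow> bool" where
  "is_tree S T \<longleftrightarrow> connected_graph S T \<and> (\<forall>e\<in>T. \<not> connected_graph S (T - {e}))"

definition spanning_trees :: "'a set \<Rightarrow> 'a set set \<Rightarrow> 'a set set set" where
  "spanning_trees V E = {T. T \<subseteq> E \<and> is_tree V T}"

definition num_spanning_trees :: "'a set \<Rightarrow> 'a set set \<Rightarrow> nat" where
  "num_spanning_trees V E = card (spanning_trees V E)"

definition splittable :: "nat \<Rightarrow> 'a set \<Rightarrow> 'a set set \<Rightarrow> bool" where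
  "splittable k V T \<longleftrightarrow> (\<exists>F. F \<subseteq> T \<and> card F = k - 1 \<and>
      card (components V (T - F)) = k \<and>
      (\<forall>A\<in>components V (T - F). \<forall>B\<in>components V (T - F). card A = card B))"

definition connected_partition :: "nat \<Rightarrow> 'a set \<Rightarrow> 'a set set \<Rightarrow> 'a set set \<Rightarrow> bool" where
  "connected_partition k V E P \<longleftrightarrow> partition_on V P \<and> card P = k \<and>
      (\<forall>S\<in>P. connected_graph S (induced_edges E S))"

definition balanced_connected_partition :: "nat \<Rightarrow> 'a set \<Rightarrow> 'a set set \<Rightarrow> 'a set set \<Rightarrow> bool" where
  "balanced_connected_partition k V E P \<longleftrightarrow> connected_partition k V E P \<and>
      (\<forall>S\<in>P. \<forall>S'\<in>P. card S = card S')"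

definition st_weight :: "'a set set \<Rightarrow> 'a set set \<Rightarrow> nat" where
  "st_weight E P = (\<Prod>S\<in>P. num_spanning_trees S (induced_edges E S))"

definition B_k :: "nat \<Rightarrow> 'a set \<Rightarrow> 'a set set \<Rightarrow> nat" where
  "B_k k V E = (\<Sum>P\<in>{P. balanced_connected_partition k V E P}. st_weight E P)"

definition tau_k :: "nat \<Rightarrow> 'a set \<Rightarrow> 'a set set \<Rightarrow> nat" where
  "tau_k k V E = card {T \<in> spanning_trees V E. splittable k V T}"

end

theory Submission
  imports Defs "HOL-Library.FuncSet"
begin


lemma adj_mono: "S \<subseteq> S' \<Longrightarrow> F \<subseteq> F' \<Longrightarrow> adj S F \<subseteq> adj S' F'"
  unfolding adj_def by auto

lemma rt_mono: "S \<subseteq> S' \<Longrightarrow> F \<subseteq> F' \<Longrightarrow> (x,y) \<in> (adj S F)\<^sup>* \<Longrightarrow> (x,y) \<in> (adj S' F')\<^sup>*"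
  using rtrancl_mono[OF adj_mono] by blast

lemma adj_sym: "(x,y) \<in> adj S F \<Longrightarrow> (y,x) \<in> adj S F"
  unfolding adj_def by (auto simp: insert_commute)

lemma rt_sym: "(x,y) \<in> (adj S F)\<^sup>* \<Longrightarrow> (y,x) \<in> (adj S F)\<^sup>*"
proof (induction rule: rtrancl_induct)
  case base then show ?case by simp
next
  case (step y z)
  then show ?case using adj_sym[OF step(2)] by (meson converse_rtrancl_into_rtrancl)
qed

lemma rt_in: "(x,y) \<in> (adj S F)\<^sup>* \<Longrightarrow> x \<in> S \<Longrightarrow> y \<in> S"
  by (induction rule: rtrancl_induct) (auto simp: adj_def)

lemma rt_in': "(x,y) \<in> (adj S F)\<^sup>* \<Longrightarrow> x \<noteq> y \<Longrightarrow> x \<in> S \<and> y \<in> S"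
proof (induction rule: rtrancl_induct)
  case base then show ?case by simp
next
  case (step y z)
  then show ?case by (cases "x = y") (auto simp: adj_def)
qed

lemma rt_edge: "u \<in> S \<Longrightarrow> v \<in> S \<Longrightarrow> {u,v} \<in> F \<Longrightarrow> (u,v) \<in> (adj S F)\<^sup>*"
  by (rule r_into_rtrancl) (auto simp: adj_def)

lemma rt_insert:
  assumes "(x,y) \<in> (adj S (insert {u,v} F))\<^sup>*"
  shows "(x,y) \<in> (adj S F)\<^sup>* \<or> ((x,u) \<in> (adj S F)\<^sup>* \<and> (v,y) \<in> (adj S F)\<^sup>*)
     \<or> ((x,v) \<in> (adj S F)\<^sup>* \<and> (u,y) \<in> (adj S F)\<^sup>*)"
  using assms
proof (induction rule: rtrancl_induct)
  case base then show ?case by simp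
next
  case (step y z)
  let ?R = "(adj S F)\<^sup>*"
  from step(2) have yz: "y \<in> S" "z \<in> S" "{y,z} = {u,v} \<or> {y,z} \<in> F" by (auto simp: adj_def)
  show ?case
  proof (cases "{y,z} \<in> F")
    case True
    then have "(y,z) \<in> ?R" using yz rt_edge by metis
    then show ?thesis using step(3) by (meson rtrancl_trans)
  next
    case False
    then have "(y = u \<and> z = v) \<or> (y = v \<and> z = u)" using yz by (auto simp: doubleton_eq_iff)
    then show ?thesis using step(3) by (metis rtrancl.rtrancl_refl rt_sym)
  qed
qed

lemma rt_insert_intro:
  assumes "u \<in> S" "v \<in> S" "(x,u) \<in> (adj S F)\<^sup>*" "(v,y) \<in> (adj S F)\<^sup>*"
  shows "(x,y) \<in> (adj S (insert {u,v} F))\<^sup>*"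
proof -
  have "(x,u) \<in> (adj S (insert {u,v} F))\<^sup>*" "(v,y) \<in> (adj S (insert {u,v} F))\<^sup>*"
    using assms rt_mono[of S S F "insert {u,v} F"] by auto
  moreover have "(u,v) \<in> (adj S (insert {u,v} F))\<^sup>*" using assms by (intro rt_edge) auto
  ultimately show ?thesis by (meson rtrancl_trans)
qed

lemma confine:
  assumes "(x,y) \<in> (adj V F)\<^sup>*" "x \<in> S"
    "\<And>a b. a \<in> S \<Longrightarrow> b \<in> V \<Longrightarrow> {a,b} \<in> F \<Longrightarrow> b \<in> S \<and> {a,b} \<in> F'"
  shows "(x,y) \<in> (adj S F')\<^sup>* \<and> y \<in> S"
  using assms(1)
proof (induction rule: rtrancl_induct)
  case base then show ?case using assms(2) by simp
next
  case (step y z)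
  then have "y \<in> S" "z \<in> V" "{y,z} \<in> F" by (auto simp: adj_def)
  then have "z \<in> S" "{y,z} \<in> F'" using assms(3) by auto
  then have "(y,z) \<in> (adj S F')\<^sup>*" using \<open>y \<in> S\<close> rt_edge by metis
  then show ?case using step \<open>z \<in> S\<close> by (meson rtrancl_trans)
qed

lemma crossing:
  assumes "connected_graph V E" "U \<subseteq> E" "x \<in> V" "y \<in> V" "(x,y) \<notin> (adj V U)\<^sup>*"
  shows "\<exists>u v. u \<in> V \<and> v \<in> V \<and> {u,v} \<in> E \<and> (u,v) \<notin> (adj V U)\<^sup>*"
proof -
  have "(x,y) \<in> (adj V E)\<^sup>*" using assms unfolding connected_graph_def by auto
  then have "(x,y) \<in> (adj V U)\<^sup>* \<or> (\<exists>u v. u \<in> V \<and> v \<in> V \<and> {u,v} \<in> E \<and> (u,v) \<notin> (adj V U)\<^sup>*)"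
  proof (induction rule: rtrancl_induct)
    case base then show ?case by simp
  next
    case (step y z)
    then have "y \<in> V" "z \<in> V" "{y,z} \<in> E" by (auto simp: adj_def)
    then show ?case using step(3) by (meson rtrancl_trans)
  qed
  then show ?thesis using assms by blast
qed



definition acyc :: "'a set \<Rightarrow> 'a set set \<Rightarrow> bool" where
  "acyc S F \<longleftrightarrow> (\<forall>u v. {u,v} \<in> F \<longrightarrow> (u,v) \<notin> (adj S (F - {{u,v}}))\<^sup>*)"

definition edges_ok :: "'a set \<Rightarrow> 'a set set \<Rightarrow> bool" where
  "edges_ok S F \<longleftrightarrow> (\<forall>e\<in>F. e \<subseteq> S \<and> card e = 2)"

lemma edges_okD: "edges_ok S F \<Longrightarrow> e \<in> F \<Longrightarrow> \<exists>u v. e = {u,v} \<and> u \<noteq> v \<and> u \<in> S \<and> v \<in> S"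
  unfolding edges_ok_def by (metis card_2_iff insert_subset)

lemma edges_ok_mono: "edges_ok S F \<Longrightarrow> F' \<subseteq> F \<Longrightarrow> edges_ok S F'"
  unfolding edges_ok_def by auto

lemma conn_minus_edge:
  assumes "connected_graph S T" "{u,v} \<in> T" "u \<in> S" "v \<in> S"
  shows "connected_graph S (T - {{u,v}}) \<longleftrightarrow> (u,v) \<in> (adj S (T - {{u,v}}))\<^sup>*"
proof
  assume "connected_graph S (T - {{u,v}})" then show "(u,v) \<in> (adj S (T - {{u,v}}))\<^sup>*"
    using assms unfolding connected_graph_def by auto
next
  assume uv: "(u,v) \<in> (adj S (T - {{u,v}}))\<^sup>*"
  have T: "T = insert {u,v} (T - {{u,v}})" using assms by auto
  show "connected_graph S (T - {{u,v}})" unfolding connected_graph_def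
  proof (intro conjI ballI)
    show "S \<noteq> {}" using assms by auto
    fix x y assume "x \<in> S" "y \<in> S"
    then have "(x,y) \<in> (adj S (insert {u,v} (T - {{u,v}})))\<^sup>*"
      using assms T unfolding connected_graph_def by metis
    from rt_insert[OF this] show "(x,y) \<in> (adj S (T - {{u,v}}))\<^sup>*"
      using uv rt_sym by (meson rtrancl_trans)
  qed
qed

lemma tree_iff:
  assumes "edges_ok S T"
  shows "is_tree S T \<longleftrightarrow> connected_graph S T \<and> acyc S T"
proof -
  have "connected_graph S T \<Longrightarrow> (\<forall>e\<in>T. \<not> connected_graph S (T - {e})) \<longleftrightarrow> acyc S T"
  proof -
    assume c: "connected_graph S T"
    show ?thesis
    proof
      assume a: "\<forall>e\<in>T. \<not> connected_graph S (T - {e})"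
      show "acyc S T" unfolding acyc_def
      proof (intro allI impI)
        fix u v assume uv: "{u,v} \<in> T"
        then obtain a b where "{u,v} = {a,b}" "a \<in> S" "b \<in> S" using edges_okD[OF assms] by metis
        then have "u \<in> S" "v \<in> S" by (auto simp: doubleton_eq_iff)
        then show "(u,v) \<notin> (adj S (T - {{u,v}}))\<^sup>*" using a uv conn_minus_edge[OF c uv] by auto
      qed
    next
      assume a: "acyc S T"
      show "\<forall>e\<in>T. \<not> connected_graph S (T - {e})"
      proof
        fix e assume e: "e \<in> T"
        then obtain u v where uv: "e = {u,v}" "u \<in> S" "v \<in> S" using edges_okD[OF assms] by metis
        then show "\<not> connected_graph S (T - {e})" using a e conn_minus_edge[OF c, of u v]
          unfolding acyc_def by auto
      qed
    qed
  qed
  then show ?thesis unfolding is_tree_def by blast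
qed

definition cl :: "'a set \<Rightarrow> 'a set set \<Rightarrow> 'a \<Rightarrow> 'a set" where
  "cl S F x = {y \<in> S. (x,y) \<in> (adj S F)\<^sup>*}"

lemma components_cl: "components S F = cl S F ` S"
  unfolding components_def quotient_def cl_def by auto

lemma equiv_comp: "equiv S {(u,v). u \<in> S \<and> v \<in> S \<and> (u,v) \<in> (adj S F)\<^sup>*}"
  unfolding equiv_def refl_on_def sym_def trans_def using rt_sym by (auto intro: rtrancl_trans)

lemma partition_components: "partition_on S (components S F)"
  unfolding components_def by (rule partition_on_quotient[OF equiv_comp])

lemma cl_eq: assumes "(x,y) \<in> (adj S F)\<^sup>*" shows "cl S F x = cl S F y"
proof -
  have yx: "(y,x) \<in> (adj S F)\<^sup>*" using rt_sym[OF assms] .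
  have "(x,z) \<in> (adj S F)\<^sup>* \<longleftrightarrow> (y,z) \<in> (adj S F)\<^sup>*" for z using assms yx rtrancl_trans by metis
  then show ?thesis unfolding cl_def by auto
qed

lemma cl_self: "x \<in> S \<Longrightarrow> x \<in> cl S F x"
  unfolding cl_def by auto

lemma finite_components: "finite S \<Longrightarrow> finite (components S F)"
  unfolding components_cl by auto

lemma connected_card1:
  assumes "finite S" "S \<noteq> {}"
  shows "connected_graph S F \<longleftrightarrow> card (components S F) = 1"
proof
  assume c: "connected_graph S F"
  then have "\<forall>x\<in>S. cl S F x = S" unfolding connected_graph_def cl_def by auto
  then have "components S F = {S}" unfolding components_cl using assms by auto
  then show "card (components S F) = 1" by simp
next
  assume "card (components S F) = 1"
  then obtain C where C: "components S F = {C}" by (meson card_1_singletonE)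
  show "connected_graph S F" unfolding connected_graph_def
  proof (intro conjI ballI)
    show "S \<noteq> {}" by fact
    fix x y assume "x \<in> S" "y \<in> S"
    then have "cl S F x = C" "cl S F y = C" using C unfolding components_cl by auto
    then show "(x,y) \<in> (adj S F)\<^sup>*" using cl_self[OF \<open>y \<in> S\<close>, of F] unfolding cl_def by auto
  qed
qed

lemma card_components_insert:
  assumes "finite S" "u \<in> S" "v \<in> S" "(u,v) \<notin> (adj S F)\<^sup>*"
  shows "card (components S (insert {u,v} F)) + 1 = card (components S F)"
proof -
  let ?R = "(adj S F)\<^sup>*"
  define N where "N = {x \<in> S. (x,u) \<notin> ?R \<and> (x,v) \<notin> ?R}"
  define A where "A = cl S F ` N"
  have clF: "cl S (insert {u,v} F) x = (if (x,u) \<in> ?R \<or> (x,v) \<in> ?R then cl S F u \<union> cl S F v else cl S F x)"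
    if "x \<in> S" for x
  proof -
    have char: "y \<in> cl S (insert {u,v} F) x \<longleftrightarrow> y \<in> S \<and> ((x,y) \<in> ?R \<or> ((x,u) \<in> ?R \<and> (v,y) \<in> ?R) \<or> ((x,v) \<in> ?R \<and> (u,y) \<in> ?R))" for y
    proof
      assume "y \<in> cl S (insert {u,v} F) x"
      then show "y \<in> S \<and> ((x,y) \<in> ?R \<or> ((x,u) \<in> ?R \<and> (v,y) \<in> ?R) \<or> ((x,v) \<in> ?R \<and> (u,y) \<in> ?R))"
        unfolding cl_def using rt_insert[of x y S u v F] by blast
    next
      assume a: "y \<in> S \<and> ((x,y) \<in> ?R \<or> ((x,u) \<in> ?R \<and> (v,y) \<in> ?R) \<or> ((x,v) \<in> ?R \<and> (u,y) \<in> ?R))"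
      have i: "insert {v,u} F = insert {u,v} F" by (simp add: insert_commute)
      show "y \<in> cl S (insert {u,v} F) x"
        using a rt_insert_intro[of u S v x F y] rt_insert_intro[of v S u x F y]
        rt_mono[of S S F "insert {u,v} F" x y] assms unfolding cl_def i by blast
    qed
    then show ?thesis
    proof (cases "(x,u) \<in> ?R \<or> (x,v) \<in> ?R")
      case True
      have "(x,u) \<in> ?R \<Longrightarrow> (u,x) \<in> ?R" "(x,v) \<in> ?R \<Longrightarrow> (v,x) \<in> ?R" by (auto intro: rt_sym)
      then have "y \<in> cl S (insert {u,v} F) x \<longleftrightarrow> y \<in> cl S F u \<union> cl S F v" for y
        using True char[of y] assms(4) unfolding cl_def
        by (smt (verit) Un_iff mem_Collect_eq rt_sym rtrancl_trans)
      then show ?thesis using True by auto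
    next
      case False
      then have "y \<in> cl S (insert {u,v} F) x \<longleftrightarrow> y \<in> cl S F x" for y
        using char[of y] unfolding cl_def by blast
      then show ?thesis using False by auto
    qed
  qed
  have c1: "components S F = A \<union> {cl S F u, cl S F v}"
    unfolding components_cl
  proof
    show "cl S F ` S \<subseteq> A \<union> {cl S F u, cl S F v}"
    proof
      fix C assume "C \<in> cl S F ` S"
      then obtain x where x: "x \<in> S" "C = cl S F x" by auto
      then show "C \<in> A \<union> {cl S F u, cl S F v}"
        using cl_eq[of x u S F] cl_eq[of x v S F] unfolding A_def N_def by auto
    qed
    show "A \<union> {cl S F u, cl S F v} \<subseteq> cl S F ` S" unfolding A_def N_def using assms by auto
  qed
  have c2: "components S (insert {u,v} F) = A \<union> {cl S F u \<union> cl S F v}"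
    unfolding components_cl
  proof
    show "cl S (insert {u,v} F) ` S \<subseteq> A \<union> {cl S F u \<union> cl S F v}"
    proof
      fix C assume "C \<in> cl S (insert {u,v} F) ` S"
      then obtain x where x: "x \<in> S" "C = cl S (insert {u,v} F) x" by auto
      then show "C \<in> A \<union> {cl S F u \<union> cl S F v}"
        using clF[OF x(1)] unfolding A_def N_def by (auto split: if_splits)
    qed
    have "cl S F u \<union> cl S F v = cl S (insert {u,v} F) u" using clF[OF assms(2)] by simp
    moreover have "A \<subseteq> cl S (insert {u,v} F) ` S"
    proof
      fix C assume "C \<in> A"
      then obtain x where x: "x \<in> N" "C = cl S F x" unfolding A_def by auto
      then show "C \<in> cl S (insert {u,v} F) ` S" using clF[of x] unfolding N_def by force
    qed
    ultimately show "A \<union> {cl S F u \<union> cl S F v} \<subseteq> cl S (insert {u,v} F) ` S" using assms by auto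
  qed
  have nA: "C \<notin> A" if "u \<in> C \<or> v \<in> C" for C
    using that unfolding A_def N_def cl_def by auto
  have ne: "cl S F u \<noteq> cl S F v" using cl_self[OF assms(3), of F] assms(4) unfolding cl_def by auto
  have fA: "finite A" unfolding A_def N_def using assms by auto
  have "card (components S F) = card A + 2"
    unfolding c1 using nA[of "cl S F u"] nA[of "cl S F v"] ne fA cl_self[OF assms(2), of F] cl_self[OF assms(3), of F]
    by (simp add: card_insert_if)
  moreover have "card (components S (insert {u,v} F)) = card A + 1"
    unfolding c2 using nA[of "cl S F u \<union> cl S F v"] fA cl_self[OF assms(2), of F]
    by (simp add: card_insert_if)
  ultimately show ?thesis by simp
qed



lemma acyc_insert:
  assumes "edges_ok S U" "acyc S U" "u \<in> S" "v \<in> S" "(u,v) \<notin> (adj S U)\<^sup>*"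
  shows "acyc S (insert {u,v} U)"
  unfolding acyc_def
proof (intro allI impI notI)
  fix a b assume ab: "{a,b} \<in> insert {u,v} U" and p: "(a,b) \<in> (adj S (insert {u,v} U - {{a,b}}))\<^sup>*"
  show False
  proof (cases "{a,b} = {u,v}")
    case True
    then have "(a,b) \<in> (adj S U)\<^sup>*" using rt_mono[OF _ _ p, of S U] by auto
    then show False using True assms(5) rt_sym by (metis doubleton_eq_iff)
  next
    case False
    then have abU: "{a,b} \<in> U" using ab by auto
    then obtain a' b' where "{a,b} = {a',b'}" "a' \<in> S" "b' \<in> S" using edges_okD[OF assms(1)] by metis
    then have abS: "a \<in> S" "b \<in> S" by (auto simp: doubleton_eq_iff)
    have eq: "insert {u,v} U - {{a,b}} = insert {u,v} (U - {{a,b}})" using False by auto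
    let ?R = "(adj S (U - {{a,b}}))\<^sup>*"
    have m: "(x,y) \<in> ?R \<Longrightarrow> (x,y) \<in> (adj S U)\<^sup>*" for x y using rt_mono[of S S "U - {{a,b}}" U] by auto
    have e: "(a,b) \<in> (adj S U)\<^sup>*" "(b,a) \<in> (adj S U)\<^sup>*" using abU abS rt_edge rt_sym by metis+
    from rt_insert[OF p[unfolded eq]]
    have "(a,b) \<in> ?R \<or> ((a,u) \<in> ?R \<and> (v,b) \<in> ?R) \<or> ((a,v) \<in> ?R \<and> (u,b) \<in> ?R)" .
    then show False
    proof (elim disjE conjE)
      assume "(a,b) \<in> ?R" then show False using assms(2) abU unfolding acyc_def by auto
    next
      assume "(a,u) \<in> ?R" "(v,b) \<in> ?R"
      then have h: "(u,a) \<in> (adj S U)\<^sup>*" "(b,v) \<in> (adj S U)\<^sup>*" using m rt_sym by metis+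
      then have "(u,b) \<in> (adj S U)\<^sup>*" using e(1) rtrancl_trans by metis
      then have "(u,v) \<in> (adj S U)\<^sup>*" using h(2) rtrancl_trans by metis
      then show False using assms(5) by simp
    next
      assume "(a,v) \<in> ?R" "(u,b) \<in> ?R"
      then have h: "(a,v) \<in> (adj S U)\<^sup>*" "(u,b) \<in> (adj S U)\<^sup>*" using m by blast+
      then have "(u,a) \<in> (adj S U)\<^sup>*" using e(2) rtrancl_trans by metis
      then have "(u,v) \<in> (adj S U)\<^sup>*" using h(1) rtrancl_trans by metis
      then show False using assms(5) by simp
    qed
  qed
qed

lemma simple_edges_ok: "simple_graph V E \<Longrightarrow> edges_ok V E"
  unfolding simple_graph_def edges_ok_def by auto

lemma simple_finite_E: "simple_graph V E \<Longrightarrow> finite E"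
  unfolding simple_graph_def by (meson Pow_iff finite_Pow_iff finite_subset subsetI)

lemma extend_aux:
  assumes "simple_graph V E" "connected_graph V E"
  shows "U \<subseteq> E \<Longrightarrow> acyc V U \<Longrightarrow> card (components V U) = m \<Longrightarrow>
    \<exists>T. U \<subseteq> T \<and> T \<subseteq> E \<and> is_tree V T \<and> card (T - U) + 1 = m"
proof (induction m arbitrary: U)
  case 0
  have "finite V" "V \<noteq> {}" using assms unfolding simple_graph_def connected_graph_def by auto
  then have "components V U \<noteq> {}" unfolding components_cl by auto
  then show ?case using 0 finite_components[OF \<open>finite V\<close>] by auto
next
  case (Suc m)
  have fV: "finite V" and neV: "V \<noteq> {}" using assms unfolding simple_graph_def connected_graph_def by auto
  have eoU: "edges_ok V U" using edges_ok_mono[OF simple_edges_ok[OF assms(1)] Suc.prems(1)] .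
  show ?case
  proof (cases "m = 0")
    case True
    then have "connected_graph V U" using connected_card1[OF fV neV] Suc.prems by simp
    then have "is_tree V U" using tree_iff[OF eoU] Suc.prems by simp
    then show ?thesis using Suc.prems True by auto
  next
    case False
    then have "\<not> connected_graph V U" using connected_card1[OF fV neV] Suc.prems by simp
    then obtain x y where "x \<in> V" "y \<in> V" "(x,y) \<notin> (adj V U)\<^sup>*" using neV unfolding connected_graph_def by auto
    then obtain u v where uv: "u \<in> V" "v \<in> V" "{u,v} \<in> E" "(u,v) \<notin> (adj V U)\<^sup>*"
      using crossing[OF assms(2) Suc.prems(1)] by blast
    let ?U = "insert {u,v} U"
    have h1: "?U \<subseteq> E" using uv Suc.prems by auto
    have h2: "acyc V ?U" using acyc_insert[OF eoU Suc.prems(2) uv(1,2,4)] .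
    have h3: "card (components V ?U) = m"
      using card_components_insert[OF fV uv(1,2,4)] Suc.prems(3) by linarith
    obtain T where T: "?U \<subseteq> T" "T \<subseteq> E" "is_tree V T" "card (T - ?U) + 1 = m"
      using Suc.IH[OF h1 h2 h3] by blast
    have nU: "{u,v} \<notin> U" using uv rt_edge by metis
    have eqTU: "T - U = insert {u,v} (T - ?U)" using T(1) nU by auto
    have "finite T" by (rule finite_subset[OF T(2) simple_finite_E[OF assms(1)]])
    then have fTU: "finite (T - ?U)" by (rule finite_Diff)
    have "card (T - U) = card (insert {u,v} (T - ?U))" using eqTU by (rule arg_cong)
    also have "\<dots> = Suc (card (T - ?U))" by (rule card_insert_disjoint[OF fTU]) blast
    finally have "card (T - U) = card (T - ?U) + 1" by simp
    then have "card (T - U) + 1 = Suc m" using T(4) by simp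
    moreover have "U \<subseteq> T" using T(1) by blast
    ultimately show ?thesis using T(2,3) by blast
  qed
qed



lemma split_piece:
  assumes "simple_graph V E" "T \<subseteq> E" "is_tree V T" "F \<subseteq> T" "C \<in> components V (T - F)"
  shows "connected_graph C (induced_edges E C)"
    "induced_edges (T - F) C \<in> spanning_trees C (induced_edges E C)"
proof -
  let ?W = "T - F"
  obtain x where x: "x \<in> V" "C = cl V ?W x" using assms(5) unfolding components_cl by auto
  have CV: "C \<subseteq> V" using x unfolding cl_def by auto
  have cond: "b \<in> C \<and> {a,b} \<in> induced_edges ?W C" if "a \<in> C" "b \<in> V" "{a,b} \<in> ?W" for a b
  proof -
    have "(x,a) \<in> (adj V ?W)\<^sup>*" using that x unfolding cl_def by auto
    moreover have "(a,b) \<in> (adj V ?W)\<^sup>*" by (rule rt_edge[OF subsetD[OF CV that(1)] that(2) that(3)])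
    ultimately have "(x,b) \<in> (adj V ?W)\<^sup>*" by (rule rtrancl_trans)
    then have "b \<in> C" using x(2) that(2) unfolding cl_def by simp
    then show ?thesis using that unfolding induced_edges_def by auto
  qed
  have c: "connected_graph C (induced_edges ?W C)" unfolding connected_graph_def
  proof (intro conjI ballI)
    show "C \<noteq> {}" using x cl_self by fastforce
    fix y z assume "y \<in> C" "z \<in> C"
    then have "(x,y) \<in> (adj V ?W)\<^sup>*" "(x,z) \<in> (adj V ?W)\<^sup>*" using x unfolding cl_def by auto
    moreover have xC: "x \<in> C" using x(2) cl_self[OF x(1)] by simp
    ultimately have xyz: "(x,y) \<in> (adj C (induced_edges ?W C))\<^sup>*" "(x,z) \<in> (adj C (induced_edges ?W C))\<^sup>*"
      using confine[of x y V ?W C "induced_edges ?W C", OF _ xC cond]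
        confine[of x z V ?W C "induced_edges ?W C", OF _ xC cond] by simp_all
    show "(y,z) \<in> (adj C (induced_edges ?W C))\<^sup>*" using rtrancl_trans[OF rt_sym[OF xyz(1)] xyz(2)] .
  qed
  have sub: "induced_edges ?W C \<subseteq> induced_edges E C" using assms(2) unfolding induced_edges_def by auto
  show "connected_graph C (induced_edges E C)"
    using c rt_mono[OF order_refl sub] unfolding connected_graph_def by blast
  have "is_tree C (induced_edges ?W C)" unfolding is_tree_def
  proof (intro conjI ballI notI)
    show "connected_graph C (induced_edges ?W C)" by fact
    fix e assume e: "e \<in> induced_edges ?W C" and cc: "connected_graph C (induced_edges ?W C - {e})"
    have eoE: "edges_ok V E" using simple_edges_ok[OF assms(1)] .
    have eT: "e \<in> T" "e \<subseteq> C" using e unfolding induced_edges_def by auto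
    then obtain u v where uv: "e = {u,v}" "u \<in> V" "v \<in> V" using edges_okD[OF eoE] assms(2) by blast
    then have "u \<in> C" "v \<in> C" using eT by auto
    then have "(u,v) \<in> (adj C (induced_edges ?W C - {e}))\<^sup>*" using cc unfolding connected_graph_def by auto
    then have "(u,v) \<in> (adj V (T - {e}))\<^sup>*"
      by (rule rt_mono[OF CV, rotated]) (auto simp: induced_edges_def)
    then have "connected_graph V (T - {e})"
      using conn_minus_edge[of V T u v] assms(3) eT uv unfolding is_tree_def by auto
    then show False using assms(3) eT unfolding is_tree_def by auto
  qed
  then show "induced_edges (T - F) C \<in> spanning_trees C (induced_edges E C)"
    using sub unfolding spanning_trees_def by auto
qed

lemma edge_in_piece:
  assumes "edges_ok V W" "e \<in> W"
  shows "\<exists>C\<in>components V W. e \<in> induced_edges W C"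
proof -
  obtain u v where uv: "e = {u,v}" "u \<in> V" "v \<in> V" using edges_okD[OF assms] by blast
  then have "(u,v) \<in> (adj V W)\<^sup>*" using rt_edge[OF uv(2,3)] assms(2) by simp
  then have "e \<subseteq> cl V W u" using uv cl_self[of u V W] unfolding cl_def by auto
  then show ?thesis using uv assms unfolding components_cl induced_edges_def by auto
qed

lemma forest_of_partition:
  assumes "simple_graph V E" "partition_on V P"
    "f \<in> (\<Pi>\<^sub>E S\<in>P. spanning_trees S (induced_edges E S))"
  defines "U \<equiv> \<Union>(f ` P)"
  shows "U \<subseteq> E" "components V U = P" "acyc V U" "\<And>S. S \<in> P \<Longrightarrow> induced_edges U S = f S"
proof -
  have fS: "f S \<subseteq> induced_edges E S" "is_tree S (f S)" if "S \<in> P" for S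
    using assms(3) that unfolding spanning_trees_def by auto
  show UE: "U \<subseteq> E" unfolding U_def using fS unfolding induced_edges_def by blast
  have eoE: "edges_ok V E" using simple_edges_ok[OF assms(1)] .
  have PV: "S \<subseteq> V" if "S \<in> P" for S using assms(2) that unfolding partition_on_def by auto
  have uniq: "S = S'" if "S \<in> P" "S' \<in> P" "x \<in> S" "x \<in> S'" for S S' x
    using assms(2) that unfolding partition_on_def disjoint_def by blast
  have inS: "e \<in> f S" if th: "e \<in> U" "S \<in> P" "e \<subseteq> S" for e S
  proof -
    obtain S' where S': "S' \<in> P" "e \<in> f S'" using th unfolding U_def by auto
    then have "e \<subseteq> S'" "e \<in> E" using fS unfolding induced_edges_def by auto
    moreover have "e \<noteq> {}" using edges_okD[OF eoE \<open>e \<in> E\<close>] by auto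
    ultimately have "S = S'" using uniq[OF th(2) S'(1)] th by auto
    then show ?thesis using S' by simp
  qed
  show ind: "induced_edges U S = f S" if "S \<in> P" for S
    using inS[OF _ that] fS[OF that] that unfolding induced_edges_def U_def by auto
  have aux: "b \<in> S \<and> {a,b} \<in> f S" if th: "S \<in> P" "a \<in> S" "b \<in> V" "{a,b} \<in> U" for S a b
  proof -
    obtain S' where S': "S' \<in> P" "{a,b} \<in> f S'" using th unfolding U_def by auto
    then have "{a,b} \<subseteq> S'" using fS unfolding induced_edges_def by auto
    then have "S = S'" using uniq[OF th(1) S'(1) th(2)] by auto
    then show ?thesis using S' \<open>{a,b} \<subseteq> S'\<close> by auto
  qed
  have clx: "cl V U x = S" if "S \<in> P" "x \<in> S" for S x
  proof
    show "cl V U x \<subseteq> S"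
    proof
      fix y assume "y \<in> cl V U x"
      then have "(x,y) \<in> (adj V U)\<^sup>*" unfolding cl_def by auto
      then show "y \<in> S" using confine[of x y V U S "f S", OF _ that(2) aux[OF that(1)]] by simp
    qed
    show "S \<subseteq> cl V U x"
    proof
      fix y assume "y \<in> S"
      then have "(x,y) \<in> (adj S (f S))\<^sup>*" using fS(2)[OF that(1)] that unfolding is_tree_def connected_graph_def by auto
      moreover have fSU: "f S \<subseteq> U" unfolding U_def using that by auto
      ultimately have "(x,y) \<in> (adj V U)\<^sup>*" using rt_mono[OF PV[OF that(1)] fSU] by simp
      then show "y \<in> cl V U x" using PV that \<open>y \<in> S\<close> unfolding cl_def by auto
    qed
  qed
  show "components V U = P" unfolding components_cl
  proof
    show "cl V U ` V \<subseteq> P"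
    proof
      fix C assume "C \<in> cl V U ` V"
      then obtain x where "x \<in> V" "C = cl V U x" by auto
      moreover obtain S where "S \<in> P" "x \<in> S" using assms(2) \<open>x \<in> V\<close> unfolding partition_on_def by auto
      ultimately show "C \<in> P" using clx by auto
    qed
    show "P \<subseteq> cl V U ` V"
    proof
      fix S assume "S \<in> P"
      then have "S \<noteq> {}" using assms(2) unfolding partition_on_def by auto
      then obtain x where "x \<in> S" by auto
      then show "S \<in> cl V U ` V" using clx[OF \<open>S \<in> P\<close>] PV[OF \<open>S \<in> P\<close>] by force
    qed
  qed
  show "acyc V U" unfolding acyc_def
  proof (intro allI impI notI)
    fix a b assume ab: "{a,b} \<in> U" and p: "(a,b) \<in> (adj V (U - {{a,b}}))\<^sup>*"
    obtain S where S: "S \<in> P" "{a,b} \<in> f S" using ab unfolding U_def by auto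
    then have abS: "a \<in> S" "b \<in> S" using fS unfolding induced_edges_def by auto
    have "(a,b) \<in> (adj S (f S - {{a,b}}))\<^sup>*"
      using confine[of a b V "U - {{a,b}}" S "f S - {{a,b}}", OF p abS(1)] aux[OF S(1)] by auto
    then have "connected_graph S (f S - {{a,b}})"
      using conn_minus_edge[of S "f S" a b] fS(2)[OF S(1)] S abS unfolding is_tree_def by auto
    then show False using fS(2)[OF S(1)] S unfolding is_tree_def by auto
  qed
qed



lemma card_E_le:
  assumes "simple_graph V E" shows "card E \<le> card V ^ 2"
proof -
  have "E \<subseteq> (\<lambda>(u,v). {u,v}) ` (V \<times> V)"
  proof
    fix e assume "e \<in> E"
    then obtain u v where "e = {u,v}" "u \<in> V" "v \<in> V" using edges_okD[OF simple_edges_ok[OF assms]] by blast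
    then show "e \<in> (\<lambda>(u,v). {u,v}) ` (V \<times> V)" by auto
  qed
  moreover have "finite V" using assms unfolding simple_graph_def by auto
  ultimately have "card E \<le> card ((\<lambda>(u,v). {u,v}) ` (V \<times> V))" by (intro card_mono) auto
  also have "\<dots> \<le> card (V \<times> V)" by (rule card_image_le) (simp add: \<open>finite V\<close>)
  finally show ?thesis by (simp add: card_cartesian_product power2_eq_square)
qed

lemma choose_bound:
  assumes "m \<le> n ^ 2" shows "m choose j \<le> n ^ (2 * j)"
proof (cases "j \<le> m")
  case True
  then have "m choose j \<le> m ^ j" by (rule binomial_le_pow)
  also have "\<dots> \<le> (n ^ 2) ^ j" using assms by (rule power_mono) simp
  finally show ?thesis by (simp add: power_mult)
next
  case False then have "m < j" by simp
  then show ?thesis by (simp add: binomial_eq_0)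
qed

lemma subsets_bound:
  assumes "simple_graph V E" "T \<subseteq> E"
  shows "card {F. F \<subseteq> T \<and> card F = j} \<le> card V ^ (2 * j)"
proof -
  have fT: "finite T" using assms simple_finite_E finite_subset by blast
  have "card T \<le> card E" using assms simple_finite_E card_mono by blast
  then have "card T \<le> card V ^ 2" using card_E_le[OF assms(1)] by simp
  then show ?thesis using n_subsets[OF fT, of j] choose_bound by simp
qed

lemma recon:
  assumes "edges_ok V T" "F \<subseteq> T"
  shows "T = F \<union> \<Union>((\<lambda>C. induced_edges (T - F) C) ` components V (T - F))"
proof -
  have "T - F \<subseteq> \<Union>((\<lambda>C. induced_edges (T - F) C) ` components V (T - F))"
    using edge_in_piece[OF edges_ok_mono[OF assms(1)]] by blast
  moreover have "\<Union>((\<lambda>C. induced_edges (T - F) C) ` components V (T - F)) \<subseteq> T"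
    unfolding induced_edges_def by auto
  ultimately show ?thesis using assms(2) by blast
qed



theorem mainTheorem9:
  fixes V :: "'a set" and E :: "'a set set" and k :: nat
  assumes "simple_graph V E" and "connected_graph V E" and "k \<ge> 1"
  shows "real (tau_k k V E) / real (card V) ^ (2 * (k - 1)) \<le> real (B_k k V E)
       \<and> real (B_k k V E) \<le> real (card V) ^ (2 * (k - 1)) * real (tau_k k V E)"
proof -
  define N where "N = card V ^ (2 * (k - 1))"
  define ST where "ST = spanning_trees V E"
  define Sk where "Sk = {T \<in> ST. splittable k V T}"
  define BP where "BP = {P. balanced_connected_partition k V E P}"
  define Y where "Y = (SIGMA P:BP. \<Pi>\<^sub>E S\<in>P. spanning_trees S (induced_edges E S))"
  define X where "X = {(T,F). T \<in> ST \<and> F \<subseteq> T \<and> card F = k - 1 \<and> card (components V (T - F)) = k \<and>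
      (\<forall>A\<in>components V (T - F). \<forall>B\<in>components V (T - F). card A = card B)}"
  define g where "g = (\<lambda>(T::'a set set, F::'a set set). (components V (T - F),
      \<lambda>C\<in>components V (T - F). induced_edges (T - F) C))"
  have fV: "finite V" and neV: "V \<noteq> {}" using assms unfolding simple_graph_def connected_graph_def by auto
  have fE: "finite E" using simple_finite_E[OF assms(1)] .
  have eoE: "edges_ok V E" using simple_edges_ok[OF assms(1)] .
  have Npos: "N > 0" unfolding N_def using fV neV by (simp add: card_gt_0_iff)
  have fST: "finite ST"
  proof -
    have "ST \<subseteq> Pow E" unfolding ST_def spanning_trees_def by auto
    then show ?thesis by (rule finite_subset) (simp add: fE)
  qed
  have fSk: "finite Sk" unfolding Sk_def using fST by simp
  have PBP: "P \<subseteq> Pow V" if "P \<in> BP" for P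
    using that unfolding BP_def balanced_connected_partition_def
      connected_partition_def partition_on_def by auto
  have fBP: "finite BP"
  proof -
    have "BP \<subseteq> Pow (Pow V)" using PBP by auto
    then show ?thesis by (rule finite_subset) (simp add: fV)
  qed
  have fsp: "finite (spanning_trees S (induced_edges E S))" for S
  proof -
    have "spanning_trees S (induced_edges E S) \<subseteq> Pow E"
      unfolding spanning_trees_def induced_edges_def by auto
    then show ?thesis by (rule finite_subset) (simp add: fE)
  qed
  have fP: "finite P" if "P \<in> BP" for P
    using PBP[OF that] by (rule finite_subset) (simp add: fV)
  have fPiE: "finite (\<Pi>\<^sub>E S\<in>P. spanning_trees S (induced_edges E S))" if "P \<in> BP" for P
    using fP[OF that] fsp by (simp add: finite_PiE)
  have cardY: "card Y = B_k k V E"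
  proof -
    have "card Y = (\<Sum>P\<in>BP. card (\<Pi>\<^sub>E S\<in>P. spanning_trees S (induced_edges E S)))"
      unfolding Y_def using fBP fPiE by (simp add: card_SigmaI)
    also have "\<dots> = (\<Sum>P\<in>BP. st_weight E P)"
    proof (rule sum.cong[OF refl])
      fix P assume "P \<in> BP"
      then have "finite P" by (rule fP)
      then show "card (\<Pi>\<^sub>E S\<in>P. spanning_trees S (induced_edges E S)) = st_weight E P"
        unfolding st_weight_def num_spanning_trees_def by (simp add: card_PiE)
    qed
    finally show ?thesis unfolding B_k_def BP_def by simp
  qed
  have fX: "finite X"
  proof -
    have "X \<subseteq> ST \<times> Pow E" unfolding X_def ST_def spanning_trees_def by auto
    then show ?thesis by (rule finite_subset) (simp add: fST fE)
  qed
  have Xmem: "(T,F) \<in> X \<longleftrightarrow> T \<in> ST \<and> F \<subseteq> T \<and> card F = k - 1 \<and> card (components V (T - F)) = k \<and>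
      (\<forall>A\<in>components V (T - F). \<forall>B\<in>components V (T - F). card A = card B)" for T F
    unfolding X_def by (simp only: mem_Collect_eq prod.case)
  have gY: "g (T,F) \<in> Y" if "(T,F) \<in> X" for T F
  proof -
    have TST: "T \<in> ST" and cT: "F \<subseteq> T" "card (components V (T - F)) = k"
      "\<forall>A\<in>components V (T - F). \<forall>B\<in>components V (T - F). card A = card B"
      using that unfolding Xmem by blast+
    have T: "T \<subseteq> E" "is_tree V T" "F \<subseteq> T" using TST cT(1) unfolding ST_def spanning_trees_def by simp_all
    have "partition_on V (components V (T - F))" by (rule partition_components)
    moreover have "\<forall>S\<in>components V (T - F). connected_graph S (induced_edges E S)"
      using split_piece(1)[OF assms(1) T] by blast
    ultimately have "balanced_connected_partition k V E (components V (T - F))"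
      unfolding balanced_connected_partition_def connected_partition_def using cT(2,3) by blast
    moreover have "(\<lambda>C\<in>components V (T - F). induced_edges (T - F) C) \<in>
        (\<Pi>\<^sub>E S\<in>components V (T - F). spanning_trees S (induced_edges E S))"
      using split_piece(2)[OF assms(1) T] by simp
    ultimately show ?thesis unfolding g_def Y_def BP_def by simp
  qed
  have Ysurj: "Y \<subseteq> g ` X"
  proof
    fix y assume "y \<in> Y"
    then obtain P f where y: "y = (P,f)" "P \<in> BP" "f \<in> (\<Pi>\<^sub>E S\<in>P. spanning_trees S (induced_edges E S))"
      unfolding Y_def by auto
    have bP: "partition_on V P" "card P = k" "\<forall>A\<in>P. \<forall>B\<in>P. card A = card B"
      using y(2) unfolding BP_def balanced_connected_partition_def connected_partition_def by blast+
    define U where "U = \<Union>(f ` P)"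
    note FP = forest_of_partition[OF assms(1) bP(1) y(3), folded U_def]
    obtain T where T: "U \<subseteq> T" "T \<subseteq> E" "is_tree V T" "card (T - U) + 1 = k"
      using extend_aux[OF assms(1,2) FP(1) FP(3)] FP(2) bP(2) by blast
    have TU: "T - (T - U) = U" using T(1) by auto
    have mem: "(T, T - U) \<in> X" unfolding Xmem ST_def spanning_trees_def TU FP(2)
    proof (intro conjI)
      show "card (T - U) = k - 1" using T(4) by simp
    qed (use T bP in blast)+
    have geq: "g (T, T - U) = y" unfolding g_def prod.case TU FP(2) y(1)
    proof -
      have "(\<lambda>C\<in>P. induced_edges U C) = f"
      proof (rule ext)
        fix C show "(\<lambda>C\<in>P. induced_edges U C) C = f C"
          using FP(4) y(3) by (cases "C \<in> P") (auto simp: PiE_def extensional_def)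
      qed
      then show "(P, \<lambda>C\<in>P. induced_edges U C) = (P, f)" by simp
    qed
    from imageI[OF mem, of g] show "y \<in> g ` X" unfolding geq .
  qed
  have XS: "X \<subseteq> (SIGMA T:Sk. {F. F \<subseteq> T \<and> card F = k - 1})"
    unfolding X_def Sk_def splittable_def by auto
  have fsubs: "finite {F. F \<subseteq> T \<and> card F = j}" if "T \<in> Sk" for T j
  proof -
    have "T \<subseteq> E" using that unfolding Sk_def ST_def spanning_trees_def by simp
    then have "finite T" by (rule finite_subset) (rule fE)
    moreover have "{F. F \<subseteq> T \<and> card F = j} \<subseteq> Pow T" by auto
    ultimately show ?thesis using finite_subset by blast
  qed
  have upper: "B_k k V E \<le> N * tau_k k V E"
  proof -
    have "B_k k V E \<le> card X" unfolding cardY[symmetric] using surj_card_le[OF fX Ysurj] .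
    also have "\<dots> \<le> card (SIGMA T:Sk. {F. F \<subseteq> T \<and> card F = k - 1})"
      using XS by (intro card_mono finite_SigmaI fSk fsubs)
    also have "\<dots> = (\<Sum>T\<in>Sk. card {F. F \<subseteq> T \<and> card F = k - 1})"
      using fSk fsubs by (intro card_SigmaI) auto
    also have "\<dots> \<le> (\<Sum>T\<in>Sk. N)"
      using subsets_bound[OF assms(1)] unfolding N_def Sk_def ST_def spanning_trees_def
      by (intro sum_mono) auto
    also have "\<dots> = N * tau_k k V E" unfolding tau_k_def Sk_def ST_def by simp
    finally show ?thesis .
  qed
  have lower: "tau_k k V E \<le> N * B_k k V E"
  proof -
    define FT where "FT T = (SOME F. F \<subseteq> T \<and> card F = k - 1 \<and> card (components V (T - F)) = k \<and>
      (\<forall>A\<in>components V (T - F). \<forall>B\<in>components V (T - F). card A = card B))" for T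
    have FT: "(T, FT T) \<in> X" if "T \<in> Sk" for T
    proof -
      have "\<exists>F. F \<subseteq> T \<and> card F = k - 1 \<and> card (components V (T - F)) = k \<and>
        (\<forall>A\<in>components V (T - F). \<forall>B\<in>components V (T - F). card A = card B)"
        using that unfolding Sk_def splittable_def by blast
      then have "FT T \<subseteq> T \<and> card (FT T) = k - 1 \<and> card (components V (T - FT T)) = k \<and>
        (\<forall>A\<in>components V (T - FT T). \<forall>B\<in>components V (T - FT T). card A = card B)"
        unfolding FT_def by (rule someI_ex)
      moreover have "T \<in> ST" using that unfolding Sk_def by blast
      ultimately show ?thesis unfolding Xmem by blast
    qed
    define phi where "phi T = (g (T, FT T), FT T)" for T
    define Z where "Z = {F. F \<subseteq> E \<and> card F = k - 1}"
    have TE: "T \<subseteq> E" if "T \<in> Sk" for T using that unfolding Sk_def ST_def spanning_trees_def by simp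
    have phiS: "phi ` Sk \<subseteq> Y \<times> Z"
    proof
      fix p assume "p \<in> phi ` Sk"
      then obtain T where T: "T \<in> Sk" "p = phi T" by blast
      have "g (T, FT T) \<in> Y" by (rule gY[OF FT[OF T(1)]])
      moreover have "FT T \<subseteq> T" "card (FT T) = k - 1" using FT[OF T(1)] unfolding Xmem by blast+
      ultimately show "p \<in> Y \<times> Z" using T TE[OF T(1)] unfolding phi_def Z_def by auto
    qed
    have recT: "T = FT T \<union> \<Union>((snd (g (T, FT T))) ` (fst (g (T, FT T))))" if "T \<in> Sk" for T
    proof -
      have "FT T \<subseteq> T" using FT[OF that] unfolding Xmem by blast
      moreover have "edges_ok V T" using edges_ok_mono[OF eoE TE[OF that]] .
      ultimately have "T = FT T \<union> \<Union>((\<lambda>C. induced_edges (T - FT T) C) ` components V (T - FT T))"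
        using recon by blast
      then show ?thesis unfolding g_def prod.case fst_conv snd_conv image_restrict_eq .
    qed
    have inj: "inj_on phi Sk"
    proof (rule inj_onI)
      fix T T' assume T: "T \<in> Sk" and T': "T' \<in> Sk" and eq: "phi T = phi T'"
      have eqp: "g (T, FT T) = g (T', FT T') \<and> FT T = FT T'" using eq unfolding phi_def prod.inject .
      have e1: "g (T, FT T) = g (T', FT T')" using eqp by (rule conjunct1)
      have e2: "FT T = FT T'" using eqp by (rule conjunct2)
      have e1': "g (T, FT T') = g (T', FT T')" using e1 e2 by simp
      have "T = FT T \<union> \<Union>((snd (g (T, FT T))) ` (fst (g (T, FT T))))" by (rule recT[OF T])
      also have "\<dots> = FT T' \<union> \<Union>((snd (g (T', FT T'))) ` (fst (g (T', FT T'))))" by (simp only: e1' e2)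
      also have "\<dots> = T'" by (rule recT[OF T', symmetric])
      finally show "T = T'" .
    qed
    have fZ: "finite Z" unfolding Z_def using fE by simp
    have fY: "finite Y" unfolding Y_def using fBP fPiE by (intro finite_SigmaI)
    have "tau_k k V E = card Sk" unfolding tau_k_def Sk_def ST_def by simp
    also have "\<dots> \<le> card (Y \<times> Z)" by (rule card_inj_on_le[OF inj phiS]) (simp add: fY fZ)
    also have "\<dots> = B_k k V E * card Z" unfolding card_cartesian_product cardY ..
    also have "\<dots> \<le> B_k k V E * N" unfolding Z_def N_def
      using subsets_bound[OF assms(1) order_refl] by (intro mult_le_mono2) blast
    finally show ?thesis by (simp add: mult.commute)
  qed
  have RN: "real N = real (card V) ^ (2 * (k - 1))" unfolding N_def by simp
  have RNpos: "real N > 0" using Npos by simp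
  have "real (tau_k k V E) \<le> real (B_k k V E) * real N"
    using lower by (metis mult.commute of_nat_le_iff of_nat_mult)
  then have "real (tau_k k V E) / real N \<le> real (B_k k V E)" using RNpos by (simp add: pos_divide_le_eq)
  moreover have "real (B_k k V E) \<le> real N * real (tau_k k V E)"
    using upper by (metis of_nat_le_iff of_nat_mult)
  ultimately show ?thesis unfolding RN by simp
qed

end
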